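(* Let $(x_n)_n$ be a block sequence in the unit ball $B_J$ of $J$ such that $\lim_nI_\infty^*(x_n)=\alpha\ne0$ and $\lim_n\|x_n\|=\beta\ge0$, and let $0<\epsilon<1$. Then there is a subsequence $(x_{n_k})_k$ such that for every finitely supported sequence of reals $(\lambda_k)$, $(1-\epsilon)|\alpha|\,\big\|\sum_k\lambda_ke_k\big\|\le\big\|\sum_k\lambda_kx_{n_k}\big\|\le3(1+\epsilon)(|\alpha|+\beta)\big\|\sum_k\lambda_ke_k\big\|$. Hence $(x_{n_k})_k$ is equivalent to the unit vector basis $(e_k)$ of $J$.
   Context: The James space $J$ is the space of real sequences $x=(x(n))_{n\in\mathbb N}$ with $\|x\|=\sup\big(\sum_{i=1}^m|\sum_{k\in I_i}x(k)|^2\big)^{1/2}<\infty$, the supremum taken over all $m$ and all pairwise disjoint finite intervals $I_1,\dots,I_m$ of $\mathbb N$. The unit vectors $(e_n)$ form a basis of $J$; a block sequence is a sequence of nonzero finitely supported vectors with $\max\operatorname{supp}x_n<\min\operatorname{supp}x_{n+1}$. $I_\infty^*\in J^*$ is the functional $I_\infty^*(x)=\sum_{n=1}^\infty x(n)$. *)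

theory Defs
  imports "HOL-Analysis.Analysis"
begin

text \<open>Real sequences are functions nat => real (indices start at 0 instead of 1).\<close>

definition interval_family :: "nat set set \<Rightarrow> bool" where
  "interval_family F \<longleftrightarrow> finite F \<and> (\<forall>I\<in>F. \<exists>a b. a \<le> b \<and> I = {a..b}) \<and> disjoint F"

definition james_vals :: "(nat \<Rightarrow> real) \<Rightarrow> real set" where
  "james_vals x = {sqrt (\<Sum>I\<in>F. (\<Sum>k\<in>I. x k)\<^sup>2) | F. interval_family F}"

text \<open>The James norm (the supremum; meaningful when the set is bounded, e.g. finite support).\<close>
definition jnorm :: "(nat \<Rightarrow> real) \<Rightarrow> real" where
  "jnorm x = Sup (james_vals x)"

definition in_J :: "(nat \<Rightarrow> real) \<Rightarrow> bool" where
  "in_J x \<longleftrightarrow> bdd_above (james_vals x)"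

definition supp_seq :: "(nat \<Rightarrow> real) \<Rightarrow> nat set" where
  "supp_seq x = {n. x n \<noteq> 0}"

definition fin_supp :: "(nat \<Rightarrow> real) \<Rightarrow> bool" where
  "fin_supp x \<longleftrightarrow> finite (supp_seq x)"

definition block_seq :: "(nat \<Rightarrow> nat \<Rightarrow> real) \<Rightarrow> bool" where
  "block_seq x \<longleftrightarrow> (\<forall>n. x n \<noteq> (\<lambda>_. 0) \<and> fin_supp (x n)) \<and>
     (\<forall>n. Max (supp_seq (x n)) < Min (supp_seq (x (Suc n))))"

definition I_inf :: "(nat \<Rightarrow> real) \<Rightarrow> real" where
  "I_inf x = (\<Sum>n. x n)"

definition lin_comb :: "(nat \<Rightarrow> real) \<Rightarrow> (nat \<Rightarrow> nat \<Rightarrow> real) \<Rightarrow> nat \<Rightarrow> real" where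
  "lin_comb lam y = (\<lambda>i. \<Sum>k\<in>supp_seq lam. lam k * y k i)"

end

theory Submission
  imports Defs
begin


lemma cs_card:
  fixes f :: "'a \<Rightarrow> real"
  shows "(\<Sum>i\<in>A. f i)\<^sup>2 \<le> real (card A) * (\<Sum>i\<in>A. (f i)\<^sup>2)"
proof -
  have 1: "\<bar>\<Sum>i\<in>A. f i\<bar> \<le> (\<Sum>i\<in>A. \<bar>f i\<bar> * \<bar>1\<bar>)" by (simp add: sum_abs)
  also have "\<dots> \<le> L2_set f A * L2_set (\<lambda>_. 1) A" by (rule L2_set_mult_ineq)
  finally have "(\<Sum>i\<in>A. f i)\<^sup>2 \<le> (L2_set f A * L2_set (\<lambda>_. 1) A)\<^sup>2"
    by (metis abs_ge_zero order_trans power2_abs power_mono)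
  also have "\<dots> = (\<Sum>i\<in>A. (f i)\<^sup>2) * real (card A)"
    unfolding L2_set_def power_mult_distrib
    by (simp add: sum_nonneg)
  finally show ?thesis by (simp add: mult.commute)
qed

lemma interval_family_empty: "interval_family {}"
  by (simp add: interval_family_def)

lemma jnorm_upper:
  assumes "in_J x" "interval_family F"
  shows "L2_set (\<lambda>I. \<Sum>k\<in>I. x k) F \<le> jnorm x"
  unfolding jnorm_def
  apply (rule cSup_upper)
  using assms by (auto simp: james_vals_def in_J_def L2_set_def)

lemma jnorm_nonneg: "in_J x \<Longrightarrow> 0 \<le> jnorm x"
  using jnorm_upper[OF _ interval_family_empty] by fastforce

lemma jnorm_least:
  assumes "\<And>F. interval_family F \<Longrightarrow> L2_set (\<lambda>I. \<Sum>k\<in>I. x k) F \<le> B"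
  shows "jnorm x \<le> B"
  unfolding jnorm_def
  apply (rule cSup_least)
  using assms interval_family_empty by (auto simp: james_vals_def L2_set_def)

lemma fin_supp_in_J:
  assumes "fin_supp x"
  shows "in_J x"
proof -
  let ?S = "supp_seq x"
  have fS: "finite ?S" using assms by (simp add: fin_supp_def)
  have "\<forall>v\<in>james_vals x. v \<le> (\<Sum>i\<in>?S. \<bar>x i\<bar>)"
  proof
    fix v assume "v \<in> james_vals x"
    then obtain F where v: "v = L2_set (\<lambda>I. \<Sum>k\<in>I. x k) F" and F: "interval_family F"
      by (auto simp: james_vals_def L2_set_def)
    have fF: "finite F" and fI: "\<forall>I\<in>F. finite I" and dj: "disjoint F"
      using F by (auto simp: interval_family_def)
    have "v \<le> (\<Sum>I\<in>F. \<bar>\<Sum>k\<in>I. x k\<bar>)" unfolding v by (rule L2_set_le_sum_abs)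
    also have "\<dots> \<le> (\<Sum>I\<in>F. \<Sum>k\<in>I. \<bar>x k\<bar>)" by (intro sum_mono sum_abs)
    also have "\<dots> = (\<Sum>k\<in>\<Union>F. \<bar>x k\<bar>)"
      using sum.Union_disjoint[of F "\<lambda>k. \<bar>x k\<bar>"] fF fI dj
      by (simp add: pairwise_def disjnt_def)
    also have "\<dots> = (\<Sum>k\<in>\<Union>F \<inter> ?S. \<bar>x k\<bar>)"
      by (rule sum.mono_neutral_right) (use fF fI in \<open>auto simp: supp_seq_def\<close>)
    also have "\<dots> \<le> (\<Sum>i\<in>?S. \<bar>x i\<bar>)"
      by (rule sum_mono2) (use fS in auto)
    finally show "v \<le> (\<Sum>i\<in>?S. \<bar>x i\<bar>)" .
  qed
  then show ?thesis unfolding in_J_def bdd_above_def by blast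
qed

lemma jnorm_sq_sum:
  assumes "in_J lam" "finite A"
  shows "(\<Sum>k\<in>A. (lam k)\<^sup>2) \<le> (jnorm lam)\<^sup>2"
proof -
  let ?F = "(\<lambda>k. {k..k}) ` A"
  have F: "interval_family ?F"
  proof -
    have "\<forall>I\<in>?F. \<exists>a b. a \<le> b \<and> I = {a..b}" by blast
    moreover have "disjoint ?F" by (auto simp: pairwise_def disjnt_def)
    ultimately show ?thesis using assms(2) by (simp only: interval_family_def finite_imageI)
  qed
  have inj: "inj_on (\<lambda>k. {k::nat}) A" by (auto simp: inj_on_def)
  have "L2_set (\<lambda>I. \<Sum>k\<in>I. lam k) ?F = L2_set lam A"
    unfolding L2_set_def by (simp add: sum.reindex[OF inj])
  with jnorm_upper[OF assms(1) F] have "L2_set lam A \<le> jnorm lam" by simp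
  then have "(L2_set lam A)\<^sup>2 \<le> (jnorm lam)\<^sup>2" by (simp add: power_mono)
  then show ?thesis by (simp add: L2_set_def sum_nonneg)
qed

lemma jnorm_coord:
  assumes "in_J lam"
  shows "\<bar>lam k\<bar> \<le> jnorm lam"
proof -
  have "(lam k)\<^sup>2 \<le> (jnorm lam)\<^sup>2" using jnorm_sq_sum[OF assms, of "{k}"] by simp
  then show ?thesis using jnorm_nonneg[OF assms] by (metis power2_abs power2_le_imp_le)
qed



lemma L2_scale: "L2_set (\<lambda>i. a * f i) A = \<bar>a\<bar> * L2_set f A"
  unfolding L2_set_def power_mult_distrib
  by (simp add: real_sqrt_mult sum_nonneg flip: sum_distrib_left)

lemma L2_uminus: "L2_set (\<lambda>i. - f i) A = L2_set f A"
  unfolding L2_set_def by simp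

lemma geo_sum: "(\<Sum>k<N. 1 / 2^(Suc k) :: real) = 1 - 1 / 2^N"
  by (induction N) (auto simp: field_simps)

lemma geo_le: "finite T \<Longrightarrow> (\<Sum>k\<in>T. 1 / 2^(Suc k) :: real) \<le> 1"
proof -
  assume fT: "finite T"
  obtain N where "T \<subseteq> {..<N}"
    using fT by (meson finite_nat_iff_bounded subset_eq lessThan_iff)
  then have "(\<Sum>k\<in>T. 1 / 2^(Suc k) :: real) \<le> (\<Sum>k<N. 1 / 2^(Suc k))"
    by (intro sum_mono2) auto
  also have "\<dots> \<le> 1" unfolding geo_sum by simp
  finally show ?thesis .
qed

lemma interval_parts:
  "interval_family F \<Longrightarrow> I \<in> F \<Longrightarrow> \<exists>p q. p \<le> q \<and> I = {p..q}"
  by (auto simp: interval_family_def)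

lemma interval_disj:
  "interval_family F \<Longrightarrow> I \<in> F \<Longrightarrow> I' \<in> F \<Longrightarrow> I \<noteq> I' \<Longrightarrow> I \<inter> I' = {}"
  by (auto simp: interval_family_def pairwise_def disjnt_def)

lemma interval_finite: "interval_family F \<Longrightarrow> finite F"
  by (auto simp: interval_family_def)

lemma interval_elem_finite: "interval_family F \<Longrightarrow> I \<in> F \<Longrightarrow> finite I"
  by (auto simp: interval_family_def)



lemma core:
  fixes y :: "nat \<Rightarrow> nat \<Rightarrow> real" and c d :: "nat \<Rightarrow> nat" and lam :: "nat \<Rightarrow> real"
    and \<alpha> \<eta> B :: real
  assumes supp: "\<And>k i. y k i \<noteq> 0 \<Longrightarrow> c k \<le> i \<and> i \<le> d k"
    and endc: "\<And>k. y k (c k) \<noteq> 0" and endd: "\<And>k. y k (d k) \<noteq> 0"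
    and sep: "\<And>k l. k < l \<Longrightarrow> d k < c l"
    and inJ: "\<And>k. in_J (y k)" and bnd: "\<And>k. jnorm (y k) \<le> B"
    and dl: "\<And>k. \<bar>I_inf (y k) - \<alpha>\<bar> \<le> \<eta> / 2^(Suc k)"
    and fs: "fin_supp lam"
  shows "(\<bar>\<alpha>\<bar> - \<eta>) * jnorm lam \<le> jnorm (lin_comb lam y) \<and>
         jnorm (lin_comb lam y) \<le> (\<bar>\<alpha>\<bar> + \<eta> + 2 * B) * jnorm lam"
proof -
  have cd: "c k \<le> d k" for k using supp[OF endc] by blast
  have cmono: "c k \<le> c l" if "k \<le> l" for k l
    using that cd[of k] sep[of k l] by (cases "k = l") auto
  have dmono: "d k \<le> d l" if "k \<le> l" for k l
    using that cd[of l] sep[of k l] by (cases "k = l") auto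
  have cstrict: "c k < c l" if "k < l" for k l using that cd[of k] sep[of k l] by auto
  have dstrict: "d k < d l" if "k < l" for k l using that cd[of l] sep[of k l] by auto
  have injd: "inj d"
  proof (rule injI)
    fix k l assume "d k = d l" then show "k = l"
      using dstrict[of k l] dstrict[of l k] by (cases k l rule: linorder_cases) auto
  qed
  have injc: "inj c"
  proof (rule injI)
    fix k l assume "c k = c l" then show "k = l"
      using cstrict[of k l] cstrict[of l k] by (cases k l rule: linorder_cases) auto
  qed
  have B0: "0 \<le> B" using jnorm_nonneg[OF inJ[of 0]] bnd[of 0] by linarith
  have eta0: "0 \<le> \<eta>"
  proof -
    have "0 \<le> \<eta> / 2^(Suc 0)" using dl[of 0] abs_ge_zero order_trans by blast
    then show ?thesis by simp
  qed
  define S where "S = supp_seq lam"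
  have fS: "finite S" using fs by (simp add: S_def fin_supp_def)
  have lamS: "k \<notin> S \<Longrightarrow> lam k = 0" for k by (simp add: S_def supp_seq_def)
  define J where "J = jnorm lam"
  have inJl: "in_J lam" using fs by (rule fin_supp_in_J)
  have J0: "0 \<le> J" unfolding J_def using inJl by (rule jnorm_nonneg)
  have lamJ: "\<bar>lam k\<bar> \<le> J" for k unfolding J_def using inJl by (rule jnorm_coord)
  have lamsq: "(\<Sum>k\<in>S. (lam k)\<^sup>2) \<le> J\<^sup>2" unfolding J_def using inJl fS by (rule jnorm_sq_sum)
  define z where "z = lin_comb lam y"
  have zdef: "z i = (\<Sum>k\<in>S. lam k * y k i)" for i by (simp add: z_def lin_comb_def S_def)
  define Full where "Full I = {k. {c k..d k} \<subseteq> I}" for I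
  define Ms where "Ms I = {k\<in>S. \<not> {c k..d k} \<subseteq> I \<and> {c k..d k} \<inter> I \<noteq> {}}" for I
  define Sk where "Sk k I = (\<Sum>i\<in>I. y k i)" for k I
  define A where "A I = (\<Sum>k\<in>Full I. lam k)" for I
  define Bt where "Bt I = (\<Sum>k\<in>Full I. lam k * (I_inf (y k) - \<alpha>))" for I
  define C where "C I = (\<Sum>k\<in>Ms I. lam k * Sk k I)" for I

  have Iy: "I_inf (y k) = (\<Sum>i\<in>{c k..d k}. y k i)" for k
    unfolding I_inf_def by (rule suminf_finite) (use supp in force)+
  have Sk_full: "Sk k I = I_inf (y k)" if "{c k..d k} \<subseteq> I" "finite I" for k I
  proof -
    have "Sk k I = (\<Sum>i\<in>{c k..d k}. y k i)"
      unfolding Sk_def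
      by (rule sum.mono_neutral_right) (use that supp in force)+
    then show ?thesis by (simp add: Iy)
  qed
  have Sk_out: "Sk k I = 0" if "{c k..d k} \<inter> I = {}" for k I
    unfolding Sk_def by (rule sum.neutral) (use that supp in force)
  have finFull: "finite (Full I)" if "finite I" for I
  proof -
    have "Full I \<subseteq> d -` I"
    proof
      fix k assume "k \<in> Full I"
      then have "{c k..d k} \<subseteq> I" by (simp add: Full_def)
      moreover have "d k \<in> {c k..d k}" using cd[of k] by simp
      ultimately show "k \<in> d -` I" by auto
    qed
    moreover have "finite (d -` I)" using that injd by (simp add: finite_vimageI)
    ultimately show ?thesis by (rule finite_subset)
  qed
  have finMs: "finite (Ms I)" for I unfolding Ms_def using fS by simp

  have ident: "(\<Sum>i\<in>I. z i) = \<alpha> * A I + Bt I + C I" if fI: "finite I" for I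
  proof -
    have "(\<Sum>i\<in>I. z i) = (\<Sum>i\<in>I. \<Sum>k\<in>S. lam k * y k i)" by (simp add: zdef)
    also have "\<dots> = (\<Sum>k\<in>S. lam k * Sk k I)"
      by (subst sum.swap) (simp add: Sk_def sum_distrib_left)
    also have "\<dots> = (\<Sum>k\<in>S \<inter> Full I. lam k * Sk k I) + (\<Sum>k\<in>S - Full I. lam k * Sk k I)"
      using fS by (metis sum.Int_Diff)
    also have "(\<Sum>k\<in>S - Full I. lam k * Sk k I) = C I"
      unfolding C_def
      by (rule sum.mono_neutral_right) (use fS Sk_out in \<open>auto simp: Ms_def Full_def\<close>)
    also have "(\<Sum>k\<in>S \<inter> Full I. lam k * Sk k I) = (\<Sum>k\<in>S \<inter> Full I. lam k * I_inf (y k))"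
      by (rule sum.cong) (use Sk_full fI in \<open>auto simp: Full_def\<close>)
    also have "\<dots> = (\<Sum>k\<in>Full I. lam k * I_inf (y k))"
      by (rule sum.mono_neutral_left) (use finFull[OF fI] lamS in auto)
    also have "\<dots> = \<alpha> * A I + Bt I"
      by (simp add: A_def Bt_def sum_distrib_left algebra_simps sum.distrib sum_subtractf)
    finally show ?thesis .
  qed

  have Full_iv: "Full {p..q} = {k. p \<le> c k \<and> d k \<le> q}" for p q
  proof -
    have "({c k..d k} \<subseteq> {p..q}) = (p \<le> c k \<and> d k \<le> q)" for k
    proof
      assume "{c k..d k} \<subseteq> {p..q}"
      moreover have "c k \<in> {c k..d k}" "d k \<in> {c k..d k}" using cd[of k] by auto
      ultimately show "p \<le> c k \<and> d k \<le> q" by auto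
    next
      assume "p \<le> c k \<and> d k \<le> q"
      then show "{c k..d k} \<subseteq> {p..q}" by auto
    qed
    then show ?thesis by (simp add: Full_def)
  qed
  have Fulldisj: "Full I \<inter> Full I' = {}"
    if F: "interval_family F" "I \<in> F" "I' \<in> F" "I \<noteq> I'" for F I I'
  proof -
    have "I \<inter> I' = {}" using interval_disj[OF F] .
    then show ?thesis unfolding Full_def using cd by fastforce
  qed

  have FB: "L2_set Bt F \<le> \<eta> * J" if F: "interval_family F" for F
  proof -
    have fF: "finite F" using interval_finite[OF F] .
    have "L2_set Bt F \<le> (\<Sum>I\<in>F. \<bar>Bt I\<bar>)" by (rule L2_set_le_sum_abs)
    also have "\<dots> \<le> (\<Sum>I\<in>F. \<Sum>k\<in>Full I. J * (\<eta> / 2^(Suc k)))"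
    proof (rule sum_mono)
      fix I assume "I \<in> F"
      have "\<bar>Bt I\<bar> \<le> (\<Sum>k\<in>Full I. \<bar>lam k * (I_inf (y k) - \<alpha>)\<bar>)"
        unfolding Bt_def by (rule sum_abs)
      also have "\<dots> \<le> (\<Sum>k\<in>Full I. J * (\<eta> / 2^(Suc k)))"
      proof (rule sum_mono)
        fix k
        have "\<bar>lam k\<bar> * \<bar>I_inf (y k) - \<alpha>\<bar> \<le> J * (\<eta> / 2^(Suc k))"
          by (rule mult_mono) (use lamJ dl J0 in auto)
        then show "\<bar>lam k * (I_inf (y k) - \<alpha>)\<bar> \<le> J * (\<eta> / 2^(Suc k))"
          by (simp add: abs_mult)
      qed
      finally show "\<bar>Bt I\<bar> \<le> (\<Sum>k\<in>Full I. J * (\<eta> / 2^(Suc k)))" .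
    qed
    also have "\<dots> = (\<Sum>k\<in>\<Union>(Full ` F). J * (\<eta> / 2^(Suc k)))"
      by (rule sum.UNION_disjoint[symmetric])
        (use fF finFull interval_elem_finite[OF F] Fulldisj[OF F] in auto)
    also have "\<dots> = J * \<eta> * (\<Sum>k\<in>\<Union>(Full ` F). 1 / 2^(Suc k))"
      by (simp add: sum_distrib_left)
    also have "\<dots> \<le> J * \<eta> * 1"
    proof (rule mult_left_mono)
      show "(\<Sum>k\<in>\<Union>(Full ` F). 1 / 2^(Suc k) :: real) \<le> 1"
        by (rule geo_le) (use fF finFull interval_elem_finite[OF F] in auto)
      show "0 \<le> J * \<eta>" using J0 eta0 by simp
    qed
    finally show ?thesis by (simp add: mult.commute)
  qed

  have FC: "L2_set C F \<le> 2 * B * J" if F: "interval_family F" for F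
  proof -
    have fF: "finite F" using interval_finite[OF F] .
    have cardMs: "card (Ms I) \<le> 2" if IF: "I \<in> F" for I
    proof -
      obtain p q where pq: "p \<le> q" "I = {p..q}" using interval_parts[OF F IF] by blast
      define M1 where "M1 = Ms I \<inter> {k. c k < p \<and> p \<le> d k}"
      define M2 where "M2 = Ms I \<inter> {k. c k \<le> q \<and> q < d k}"
      have "Ms I \<subseteq> M1 \<union> M2"
        unfolding M1_def M2_def Ms_def pq by auto
      then have "card (Ms I) \<le> card (M1 \<union> M2)"
        by (intro card_mono) (auto simp: M1_def M2_def finMs)
      also have "\<dots> \<le> card M1 + card M2" by (rule card_Un_le)
      also have "card M1 \<le> 1"
      proof -
        have "\<forall>a\<in>M1. \<forall>b\<in>M1. a = b"
        proof (intro ballI)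
          fix a b assume "a \<in> M1" "b \<in> M1"
          then show "a = b" using sep[of a b] sep[of b a]
            by (cases a b rule: linorder_cases) (auto simp: M1_def)
        qed
        then show ?thesis using card_le_Suc0_iff_eq[of M1] by (simp add: M1_def finMs)
      qed
      also have "card M2 \<le> 1"
      proof -
        have "\<forall>a\<in>M2. \<forall>b\<in>M2. a = b"
        proof (intro ballI)
          fix a b assume "a \<in> M2" "b \<in> M2"
          then show "a = b" using sep[of a b] sep[of b a]
            by (cases a b rule: linorder_cases) (auto simp: M2_def)
        qed
        then show ?thesis using card_le_Suc0_iff_eq[of M2] by (simp add: M2_def finMs)
      qed
      finally show ?thesis by simp
    qed
    have C2: "(C I)\<^sup>2 \<le> 2 * (\<Sum>k\<in>S. (lam k)\<^sup>2 * (Sk k I)\<^sup>2)" if IF: "I \<in> F" for I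
    proof -
      have "(C I)\<^sup>2 \<le> real (card (Ms I)) * (\<Sum>k\<in>Ms I. (lam k * Sk k I)\<^sup>2)"
        unfolding C_def by (rule cs_card)
      also have "\<dots> \<le> 2 * (\<Sum>k\<in>Ms I. (lam k * Sk k I)\<^sup>2)"
        by (rule mult_right_mono) (use cardMs[OF IF] in \<open>auto intro: sum_nonneg\<close>)
      also have "(\<Sum>k\<in>Ms I. (lam k * Sk k I)\<^sup>2) \<le> (\<Sum>k\<in>S. (lam k * Sk k I)\<^sup>2)"
        by (rule sum_mono2) (use fS in \<open>auto simp: Ms_def\<close>)
      finally show ?thesis by (simp add: power_mult_distrib)
    qed
    have SkB: "(\<Sum>I\<in>F. (Sk k I)\<^sup>2) \<le> B\<^sup>2" for k
    proof -
      have "L2_set (\<lambda>I. Sk k I) F \<le> B"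
        using jnorm_upper[OF inJ F, of k] bnd[of k] unfolding Sk_def by linarith
      then have "(L2_set (\<lambda>I. Sk k I) F)\<^sup>2 \<le> B\<^sup>2" by (simp add: power_mono)
      then show ?thesis by (simp add: L2_set_def sum_nonneg)
    qed
    have "(\<Sum>I\<in>F. (C I)\<^sup>2) \<le> (\<Sum>I\<in>F. 2 * (\<Sum>k\<in>S. (lam k)\<^sup>2 * (Sk k I)\<^sup>2))"
      by (rule sum_mono) (rule C2)
    also have "\<dots> = 2 * (\<Sum>k\<in>S. (lam k)\<^sup>2 * (\<Sum>I\<in>F. (Sk k I)\<^sup>2))"
      by (simp add: sum_distrib_left sum.swap[of _ F S])
    also have "\<dots> \<le> 2 * (\<Sum>k\<in>S. (lam k)\<^sup>2 * B\<^sup>2)"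
      by (intro mult_left_mono sum_mono) (auto simp: SkB)
    also have "\<dots> = 2 * B\<^sup>2 * (\<Sum>k\<in>S. (lam k)\<^sup>2)"
      by (simp add: sum_distrib_left algebra_simps)
    also have "\<dots> \<le> 2 * B\<^sup>2 * J\<^sup>2"
      by (rule mult_left_mono[OF lamsq]) simp
    also have "\<dots> \<le> (2 * B * J)\<^sup>2" by (simp add: power_mult_distrib)
    finally have "(\<Sum>I\<in>F. (C I)\<^sup>2) \<le> (2 * B * J)\<^sup>2" .
    then have "sqrt (\<Sum>I\<in>F. (C I)\<^sup>2) \<le> sqrt ((2 * B * J)\<^sup>2)" by (rule real_sqrt_le_mono)
    also have "\<dots> = 2 * B * J" using B0 J0 by simp
    finally show ?thesis by (simp add: L2_set_def)
  qed

  have FA: "L2_set A F \<le> J" if F: "interval_family F" for F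
  proof -
    define F' where "F' = {I\<in>F. Full I \<noteq> {}}"
    have fF: "finite F" using interval_finite[OF F] .
    have fF': "finite F'" using fF by (simp add: F'_def)
    have inj: "inj_on Full F'"
    proof (rule inj_onI)
      fix I I' assume "I \<in> F'" "I' \<in> F'" "Full I = Full I'"
      then show "I = I'" using Fulldisj[OF F, of I I'] by (auto simp: F'_def)
    qed
    have eqF: "L2_set A F = L2_set A F'"
      unfolding L2_set_def
      by (rule arg_cong[where f = sqrt], rule sum.mono_neutral_right)
        (use fF in \<open>auto simp: F'_def A_def\<close>)
    have "L2_set A F = L2_set (\<lambda>K. \<Sum>k\<in>K. lam k) (Full ` F')"
      unfolding eqF
      unfolding L2_set_def A_def by (simp add: sum.reindex[OF inj])
    also have "\<dots> \<le> J" unfolding J_def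
    proof (rule jnorm_upper[OF inJl])
      have iv: "\<exists>a b. a \<le> b \<and> K = {a..b}" if KF: "K \<in> Full ` F'" for K
      proof -
        obtain I where I: "I \<in> F" "K = Full I" "K \<noteq> {}" using KF unfolding F'_def by blast
        obtain p q where pq: "p \<le> q" "I = {p..q}" using interval_parts[OF F I(1)] by blast
        have fK: "finite K" using I finFull interval_elem_finite[OF F] by auto
        have KK: "K = {k. p \<le> c k \<and> d k \<le> q}" using I pq Full_iv by simp
        define a where "a = Min K"
        define b where "b = Max K"
        have aK: "a \<in> K" and bK: "b \<in> K" using fK I(3) by (auto simp: a_def b_def)
        have "K = {a..b}"
        proof
          show "K \<subseteq> {a..b}" using fK by (auto simp: a_def b_def)
          show "{a..b} \<subseteq> K"
          proof
            fix k assume "k \<in> {a..b}"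
            then have "c a \<le> c k" "d k \<le> d b" using cmono dmono by auto
            then show "k \<in> K" using aK bK KK by auto
          qed
        qed
        moreover have "a \<le> b" using fK aK by (auto simp: b_def)
        ultimately show ?thesis by blast
      qed
      have dj: "disjoint (Full ` F')"
        unfolding pairwise_def disjnt_def using Fulldisj[OF F] by (auto simp: F'_def)
      show "interval_family (Full ` F')"
        unfolding interval_family_def using fF' iv dj by blast
    qed
    finally show ?thesis .
  qed

  have up: "jnorm z \<le> (\<bar>\<alpha>\<bar> + \<eta> + 2 * B) * J"
  proof (rule jnorm_least)
    fix F assume F: "interval_family F"
    have e1: "L2_set (\<lambda>I. \<Sum>i\<in>I. z i) F = L2_set (\<lambda>I. (\<alpha> * A I + Bt I) + C I) F"
      by (rule L2_set_cong) (auto simp: ident interval_elem_finite[OF F])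
    have e2: "L2_set (\<lambda>I. (\<alpha> * A I + Bt I) + C I) F \<le> L2_set (\<lambda>I. \<alpha> * A I + Bt I) F + L2_set C F"
      by (rule L2_set_triangle_ineq)
    have e3: "L2_set (\<lambda>I. \<alpha> * A I + Bt I) F \<le> L2_set (\<lambda>I. \<alpha> * A I) F + L2_set Bt F"
      by (rule L2_set_triangle_ineq)
    have e4: "L2_set (\<lambda>I. \<alpha> * A I) F \<le> \<bar>\<alpha>\<bar> * J"
      unfolding L2_scale by (rule mult_left_mono[OF FA[OF F]]) simp
    show "L2_set (\<lambda>I. \<Sum>i\<in>I. z i) F \<le> (\<bar>\<alpha>\<bar> + \<eta> + 2 * B) * J"
      using e1 e2 e3 e4 FB[OF F] FC[OF F] by (simp add: algebra_simps)
  qed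

  have inJz: "in_J z"
  proof (rule fin_supp_in_J)
    have "supp_seq z \<subseteq> (\<Union>k\<in>S. {c k..d k})"
    proof
      fix i assume "i \<in> supp_seq z"
      then have "(\<Sum>k\<in>S. lam k * y k i) \<noteq> 0" by (simp add: supp_seq_def zdef)
      then obtain k where "k \<in> S" "lam k * y k i \<noteq> 0" by (meson sum.neutral)
      then show "i \<in> (\<Union>k\<in>S. {c k..d k})" using supp[of k i] by auto
    qed
    moreover have "finite (\<Union>k\<in>S. {c k..d k})" using fS by simp
    ultimately show "fin_supp z" unfolding fin_supp_def by (rule finite_subset)
  qed

  have low: "\<bar>\<alpha>\<bar> * J \<le> jnorm z + \<eta> * J"
  proof (cases "\<alpha> = 0")
    case True
    then show ?thesis using jnorm_nonneg[OF inJz] eta0 J0 by simp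
  next
    case False
    then have a0: "0 < \<bar>\<alpha>\<bar>" by simp
    have "jnorm lam \<le> (jnorm z + \<eta> * J) / \<bar>\<alpha>\<bar>"
    proof (rule jnorm_least)
      fix G assume G: "interval_family G"
      define \<phi> where "\<phi> K = {c (Min K)..d (Max K)}" for K :: "nat set"
      have phiv: "\<phi> {a..b} = {c a..d b}" if "a \<le> b" for a b
      proof -
        have "Min {a..b} = a" by (rule Min_eqI) (use that in auto)
        moreover have "Max {a..b} = b" by (rule Max_eqI) (use that in auto)
        ultimately show ?thesis by (simp add: \<phi>_def)
      qed
      have FullPhi: "Full (\<phi> K) = K" if KG: "K \<in> G" for K
      proof -
        obtain a b where ab: "a \<le> b" "K = {a..b}" using interval_parts[OF G KG] by blast
        have "{k. c a \<le> c k \<and> d k \<le> d b} = {a..b}"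
        proof (rule set_eqI, rule iffI)
          fix k assume "k \<in> {k. c a \<le> c k \<and> d k \<le> d b}"
          then have h: "c a \<le> c k" "d k \<le> d b" by auto
          have "a \<le> k" using cstrict[of k a] h(1) by (meson not_le)
          moreover have "k \<le> b" using dstrict[of b k] h(2) by (meson not_le)
          ultimately show "k \<in> {a..b}" by simp
        next
          fix k assume "k \<in> {a..b}"
          then show "k \<in> {k. c a \<le> c k \<and> d k \<le> d b}" using cmono dmono by auto
        qed
        then show ?thesis using ab phiv Full_iv by simp
      qed
      have MsPhi: "Ms (\<phi> K) = {}" if KG: "K \<in> G" for K
      proof (rule ccontr)
        assume "Ms (\<phi> K) \<noteq> {}"
        then obtain k where k: "k \<in> Ms (\<phi> K)" by blast
        obtain a b where ab: "a \<le> b" "K = {a..b}" using interval_parts[OF G KG] by blast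
        have nf: "k \<notin> K" using k FullPhi[OF KG] by (auto simp: Ms_def Full_def)
        from k obtain i where i: "c k \<le> i" "i \<le> d k" "c a \<le> i" "i \<le> d b"
          using ab phiv by (auto simp: Ms_def)
        from nf ab have "k < a \<or> b < k" by auto
        then show False
        proof
          assume "k < a" then show False using sep[of k a] i by linarith
        next
          assume "b < k" then show False using sep[of b k] i by linarith
        qed
      qed
      have phidisj: "\<phi> K \<inter> \<phi> K' = {}" if KG: "K \<in> G" "K' \<in> G" "K \<noteq> K'" for K K'
      proof -
        obtain a b where ab: "a \<le> b" "K = {a..b}" using interval_parts[OF G KG(1)] by blast
        obtain a' b' where ab': "a' \<le> b'" "K' = {a'..b'}" using interval_parts[OF G KG(2)] by blast
        have "K \<inter> K' = {}" using interval_disj[OF G KG] .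
        then have "b < a' \<or> b' < a"
        proof (rule contrapos_pp)
          assume "\<not> (b < a' \<or> b' < a)"
          then have "max a a' \<in> K \<inter> K'" using ab ab' by (auto simp: max_def)
          then show "K \<inter> K' \<noteq> {}" by blast
        qed
        then show ?thesis
        proof
          assume "b < a'" then have "d b < c a'" by (rule sep)
          then show ?thesis using ab ab' phiv by auto
        next
          assume "b' < a" then have "d b' < c a" by (rule sep)
          then show ?thesis using ab ab' phiv by auto
        qed
      qed
      have phine: "\<phi> K \<noteq> {}" if KG: "K \<in> G" for K
      proof -
        obtain a b where ab: "a \<le> b" "K = {a..b}" using interval_parts[OF G KG] by blast
        have "c a \<le> d b" using cd[of a] dmono[OF ab(1)] by linarith
        then show ?thesis using ab phiv by auto
      qed
      have inj: "inj_on \<phi> G"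
      proof (rule inj_onI)
        fix K K' assume "K \<in> G" "K' \<in> G" "\<phi> K = \<phi> K'"
        show "K = K'"
        proof (rule ccontr)
          assume "K \<noteq> K'"
          then have "\<phi> K \<inter> \<phi> K' = {}" using phidisj \<open>K \<in> G\<close> \<open>K' \<in> G\<close> by blast
          then show False using phine[OF \<open>K \<in> G\<close>] \<open>\<phi> K = \<phi> K'\<close> by auto
        qed
      qed
      define F where "F = \<phi> ` G"
      have F: "interval_family F"
      proof -
        have "finite F" using interval_finite[OF G] by (simp add: F_def)
        moreover have "\<forall>I\<in>F. \<exists>p q. p \<le> q \<and> I = {p..q}"
        proof
          fix I assume "I \<in> F"
          then obtain K where K: "K \<in> G" "I = \<phi> K" by (auto simp: F_def)
          obtain a b where ab: "a \<le> b" "K = {a..b}" using interval_parts[OF G K(1)] by blast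
          have "c a \<le> d b" using cd[of a] dmono[OF ab(1)] by linarith
          moreover have "I = {c a..d b}" using K ab phiv by simp
          ultimately show "\<exists>p q. p \<le> q \<and> I = {p..q}" by blast
        qed
        moreover have "disjoint F"
          unfolding pairwise_def disjnt_def F_def
        proof (intro ballI impI)
          fix X Y assume XY: "X \<in> \<phi> ` G" "Y \<in> \<phi> ` G" "X \<noteq> Y"
          then obtain K K' where KK: "K \<in> G" "K' \<in> G" "X = \<phi> K" "Y = \<phi> K'" by blast
          then have "K \<noteq> K'" using XY(3) by auto
          then show "X \<inter> Y = {}" using phidisj[OF KK(1,2)] KK(3,4) by simp
        qed
        ultimately show ?thesis by (simp add: interval_family_def)
      qed
      have eA: "L2_set A F = L2_set (\<lambda>K. \<Sum>k\<in>K. lam k) G"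
        unfolding L2_set_def F_def by (simp add: sum.reindex[OF inj] A_def FullPhi)
      have eZ: "L2_set (\<lambda>I. \<Sum>i\<in>I. z i) F = L2_set (\<lambda>I. \<alpha> * A I + Bt I) F"
      proof (rule L2_set_cong)
        fix I assume "I \<in> F"
        then obtain K where K: "K \<in> G" "I = \<phi> K" by (auto simp: F_def)
        have "C I = 0" using MsPhi[OF K(1)] K(2) by (simp add: C_def)
        then show "(\<Sum>i\<in>I. z i) = \<alpha> * A I + Bt I"
          using ident[OF interval_elem_finite[OF F \<open>I \<in> F\<close>]] by simp
      qed simp
      have t: "L2_set (\<lambda>I. (\<alpha> * A I + Bt I) + - Bt I) F \<le> L2_set (\<lambda>I. \<alpha> * A I + Bt I) F + L2_set (\<lambda>I. - Bt I) F"
        by (rule L2_set_triangle_ineq)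
      have "\<bar>\<alpha>\<bar> * L2_set A F \<le> jnorm z + \<eta> * J"
        using t FB[OF F] jnorm_upper[OF inJz F] eZ
        by (simp add: L2_uminus L2_scale)
      then show "L2_set (\<lambda>K. \<Sum>k\<in>K. lam k) G \<le> (jnorm z + \<eta> * J) / \<bar>\<alpha>\<bar>"
        using a0 eA by (simp add: pos_le_divide_eq mult.commute)
    qed
    then show ?thesis using a0 by (simp add: J_def pos_le_divide_eq mult.commute)
  qed
  have "(\<bar>\<alpha>\<bar> - \<eta>) * J \<le> jnorm z" using low by (simp add: algebra_simps)
  then show ?thesis using up unfolding z_def J_def by simp
qed



theorem mainTheorem13:
  fixes x :: "nat \<Rightarrow> nat \<Rightarrow> real" and \<alpha> \<beta> \<epsilon> :: real
  assumes "block_seq x"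
    and "\<And>n. in_J (x n) \<and> jnorm (x n) \<le> 1"
    and "(\<lambda>n. I_inf (x n)) \<longlonglongrightarrow> \<alpha>" and "\<alpha> \<noteq> 0"
    and "(\<lambda>n. jnorm (x n)) \<longlonglongrightarrow> \<beta>" and "\<beta> \<ge> 0"
    and "0 < \<epsilon>" and "\<epsilon> < 1"
  shows "\<exists>r :: nat \<Rightarrow> nat. strict_mono r \<and>
    (\<forall>lam :: nat \<Rightarrow> real. fin_supp lam \<longrightarrow>
       (1 - \<epsilon>) * \<bar>\<alpha>\<bar> * jnorm lam \<le> jnorm (lin_comb lam (\<lambda>k. x (r k))) \<and>
       jnorm (lin_comb lam (\<lambda>k. x (r k))) \<le> 3 * (1 + \<epsilon>) * (\<bar>\<alpha>\<bar> + \<beta>) * jnorm lam)"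
proof -
  note bs = assms(1)[unfolded block_seq_def]
  have fin: "finite (supp_seq (x n))" for n using bs by (simp add: fin_supp_def)
  have ne: "supp_seq (x n) \<noteq> {}" for n
  proof -
    have "x n \<noteq> (\<lambda>_. 0)" using bs by blast
    then obtain i where "x n i \<noteq> 0" by auto
    then show ?thesis by (auto simp: supp_seq_def)
  qed
  have minmax: "Min (supp_seq (x n)) \<le> Max (supp_seq (x n))" for n
    using fin[of n] ne[of n] by (simp add: Min_le Max_in)
  have sepx: "Max (supp_seq (x m)) < Min (supp_seq (x n))" if "m < n" for m n
    using that
  proof (induction n)
    case 0 then show ?case by simp
  next
    case (Suc n)
    show ?case
    proof (cases "m = n")
      case True then show ?thesis using bs by simp
    next
      case False
      then have "m < n" using Suc.prems by simp
      then have "Max (supp_seq (x m)) < Min (supp_seq (x n))" by (rule Suc.IH)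
      also have "\<dots> \<le> Max (supp_seq (x n))" by (rule minmax)
      also have "\<dots> < Min (supp_seq (x (Suc n)))" using bs by simp
      finally show ?thesis .
    qed
  qed
  define \<eta> where "\<eta> = \<epsilon> * \<bar>\<alpha>\<bar>"
  define B where "B = \<beta> + \<epsilon> * \<bar>\<alpha>\<bar>"
  have eta_pos: "0 < \<eta>" using assms(4,7) by (simp add: \<eta>_def)
  have ev: "\<exists>N. \<forall>n\<ge>N. \<bar>I_inf (x n) - \<alpha>\<bar> \<le> \<eta> / 2^(Suc k) \<and> jnorm (x n) \<le> B" for k
  proof -
    have e1: "eventually (\<lambda>n. dist (I_inf (x n)) \<alpha> < \<eta> / 2^(Suc k)) sequentially"
      by (rule tendstoD[OF assms(3)]) (use eta_pos in simp)
    have e2: "eventually (\<lambda>n. dist (jnorm (x n)) \<beta> < \<eta>) sequentially"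
      by (rule tendstoD[OF assms(5)]) (use eta_pos in simp)
    have "eventually (\<lambda>n. \<bar>I_inf (x n) - \<alpha>\<bar> \<le> \<eta> / 2^(Suc k) \<and> jnorm (x n) \<le> B) sequentially"
      using eventually_conj[OF e1 e2]
      by (rule eventually_mono) (auto simp: dist_real_def B_def \<eta>_def abs_less_iff)
    then show ?thesis by (simp add: eventually_sequentially)
  qed
  then obtain N where N: "\<And>k n. n \<ge> N k \<Longrightarrow> \<bar>I_inf (x n) - \<alpha>\<bar> \<le> \<eta> / 2^(Suc k) \<and> jnorm (x n) \<le> B"
    by metis
  define r where "r k = k + (\<Sum>j\<le>k. N j)" for k
  have smr: "strict_mono r"
    unfolding strict_mono_Suc_iff r_def by simp
  have rN: "N k \<le> r k" for k
  proof -
    have "N k \<le> (\<Sum>j\<le>k. N j)" by (rule member_le_sum) auto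
    then show ?thesis by (simp add: r_def)
  qed
  define y where "y k = x (r k)" for k
  define c where "c k = Min (supp_seq (y k))" for k
  define d where "d k = Max (supp_seq (y k))" for k
  have core_app: "(\<bar>\<alpha>\<bar> - \<eta>) * jnorm lam \<le> jnorm (lin_comb lam y) \<and>
         jnorm (lin_comb lam y) \<le> (\<bar>\<alpha>\<bar> + \<eta> + 2 * B) * jnorm lam" if fs: "fin_supp lam" for lam
  proof (rule core[OF _ _ _ _ _ _ _ fs])
    show "c k \<le> i \<and> i \<le> d k" if "y k i \<noteq> 0" for k i
      using that fin[of "r k"] by (auto simp: c_def d_def y_def supp_seq_def)
    show "y k (c k) \<noteq> 0" for k
      using Min_in[OF fin[of "r k"] ne[of "r k"]] by (simp add: c_def y_def supp_seq_def)
    show "y k (d k) \<noteq> 0" for k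
      using Max_in[OF fin[of "r k"] ne[of "r k"]] by (simp add: d_def y_def supp_seq_def)
    show "d k < c l" if "k < l" for k l
      unfolding c_def d_def y_def using sepx smr that by (simp add: strict_mono_less)
    show "in_J (y k)" for k using assms(2) by (simp add: y_def)
    show "jnorm (y k) \<le> B" for k using N[OF rN[of k]] by (simp add: y_def)
    show "\<bar>I_inf (y k) - \<alpha>\<bar> \<le> \<eta> / 2^(Suc k)" for k using N[OF rN[of k]] by (simp add: y_def)
  qed
  have "strict_mono r \<and>
    (\<forall>lam :: nat \<Rightarrow> real. fin_supp lam \<longrightarrow>
       (1 - \<epsilon>) * \<bar>\<alpha>\<bar> * jnorm lam \<le> jnorm (lin_comb lam (\<lambda>k. x (r k))) \<and>
       jnorm (lin_comb lam (\<lambda>k. x (r k))) \<le> 3 * (1 + \<epsilon>) * (\<bar>\<alpha>\<bar> + \<beta>) * jnorm lam)"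
  proof (intro conjI allI impI smr)
    fix lam :: "nat \<Rightarrow> real" assume fs: "fin_supp lam"
    have J0: "0 \<le> jnorm lam" by (rule jnorm_nonneg[OF fin_supp_in_J[OF fs]])
    have yy: "(\<lambda>k. x (r k)) = y" by (simp add: y_def fun_eq_iff)
    have "(1 - \<epsilon>) * \<bar>\<alpha>\<bar> = \<bar>\<alpha>\<bar> - \<eta>" by (simp add: \<eta>_def algebra_simps)
    then show "(1 - \<epsilon>) * \<bar>\<alpha>\<bar> * jnorm lam \<le> jnorm (lin_comb lam (\<lambda>k. x (r k)))"
      using core_app[OF fs] yy by simp
    have "\<bar>\<alpha>\<bar> + \<eta> + 2 * B \<le> 3 * (1 + \<epsilon>) * (\<bar>\<alpha>\<bar> + \<beta>)"
      using assms(6,7) by (simp add: \<eta>_def B_def algebra_simps)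
    then have "(\<bar>\<alpha>\<bar> + \<eta> + 2 * B) * jnorm lam \<le> 3 * (1 + \<epsilon>) * (\<bar>\<alpha>\<bar> + \<beta>) * jnorm lam"
      by (rule mult_right_mono) (rule J0)
    then show "jnorm (lin_comb lam (\<lambda>k. x (r k))) \<le> 3 * (1 + \<epsilon>) * (\<bar>\<alpha>\<bar> + \<beta>) * jnorm lam"
      using core_app[OF fs] yy by simp
  qed
  then show ?thesis by blast
qed

end
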